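(* Let $g\geq 1$, $k\geq 1$, $r\geq 1$ be integers and let $x$ be an integer with $g+1\leq x\leq 2g$. Let $T$ be the tree obtained from $r$ stars $K_{1,g}$ with centers $v_1,\ldots,v_r$, one star $K_{1,x}$ with center $v_{r+1}$, and $k$ further vertices $w,u_1,\ldots,u_{k-1}$, by adding the edges $wu_i$ ($1\le i\le k-1$) and $wv_i$ ($1\leq i\leq r+1$). Then $T$ has order $n=(g+1)r+x+1+k$, has an $R_g$-cutset, and $$\kappa_g(T)=k.$$
   Context: All graphs are finite and simple. $K_{1,t}$ denotes the star with one center and $t$ leaves. A set $S\subseteq V(G)$ is a cutset if $G-S$ is disconnected. For a non-negative integer $g$, a cutset $S$ is an $R_g$-cutset if every connected component of $G-S$ has at least $g+1$ vertices. If $G$ has at least one $R_g$-cutset, the $g$-extra connectivity $\kappa_g(G)$ is the minimum cardinality of an $R_g$-cutset of $G$. *)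

theory Defs
  imports Main
begin

text \<open>A finite simple graph is given by a finite vertex set V and a symmetric,
irreflexive adjacency relation E (only edges between vertices of V matter).\<close>

definition reach_in :: "'a set \<Rightarrow> ('a \<Rightarrow> 'a \<Rightarrow> bool) \<Rightarrow> 'a \<Rightarrow> 'a \<Rightarrow> bool" where
  "reach_in A E a b \<longleftrightarrow> (a, b) \<in> {(x, y). x \<in> A \<and> y \<in> A \<and> E x y}\<^sup>*"

definition comp_in :: "'a set \<Rightarrow> ('a \<Rightarrow> 'a \<Rightarrow> bool) \<Rightarrow> 'a \<Rightarrow> 'a set" where
  "comp_in A E a = {b \<in> A. reach_in A E a b}"

definition is_cutset :: "'a set \<Rightarrow> ('a \<Rightarrow> 'a \<Rightarrow> bool) \<Rightarrow> 'a set \<Rightarrow> bool" where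
  "is_cutset V E S \<longleftrightarrow> S \<subseteq> V \<and> (\<exists>a\<in>V - S. \<exists>b\<in>V - S. \<not> reach_in (V - S) E a b)"

definition is_Rg_cutset :: "nat \<Rightarrow> 'a set \<Rightarrow> ('a \<Rightarrow> 'a \<Rightarrow> bool) \<Rightarrow> 'a set \<Rightarrow> bool" where
  "is_Rg_cutset g V E S \<longleftrightarrow> is_cutset V E S \<and>
     (\<forall>a\<in>V - S. card (comp_in (V - S) E a) \<ge> g + 1)"

definition kappa_g :: "nat \<Rightarrow> 'a set \<Rightarrow> ('a \<Rightarrow> 'a \<Rightarrow> bool) \<Rightarrow> nat" where
  "kappa_g g V E = (LEAST m. \<exists>S. is_Rg_cutset g V E S \<and> card S = m)"

text \<open>The tree T. Vertices: W = w, U i = u_i, C i = v_i (star centers),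
  L i j = j-th leaf of the star with center v_i.\<close>
datatype vtx = W | U nat | C nat | L nat nat

definition T_verts :: "nat \<Rightarrow> nat \<Rightarrow> nat \<Rightarrow> nat \<Rightarrow> vtx set" where
  "T_verts g k r x =
     {W} \<union> {U i | i. 1 \<le> i \<and> i \<le> k - 1} \<union> {C i | i. 1 \<le> i \<and> i \<le> r + 1}
     \<union> {L i j | i j. 1 \<le> i \<and> i \<le> r \<and> 1 \<le> j \<and> j \<le> g}
     \<union> {L (r + 1) j | j. 1 \<le> j \<and> j \<le> x}"

definition T_adj0 :: "vtx \<Rightarrow> vtx \<Rightarrow> bool" where
  "T_adj0 a b \<longleftrightarrow> (\<exists>i. a = W \<and> b = U i) \<or> (\<exists>i. a = W \<and> b = C i)
     \<or> (\<exists>i j. a = C i \<and> b = L i j)"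

definition T_adj :: "vtx \<Rightarrow> vtx \<Rightarrow> bool" where
  "T_adj a b \<longleftrightarrow> T_adj0 a b \<or> T_adj0 b a"

end

theory Submission
  imports Defs
begin

lemma adjW[simp]: "T_adj W b \<longleftrightarrow> (\<exists>i. b = U i) \<or> (\<exists>i. b = C i)"
  by (cases b) (auto simp: T_adj_def T_adj0_def)
lemma adjU[simp]: "T_adj (U i) b \<longleftrightarrow> b = W"
  by (cases b) (auto simp: T_adj_def T_adj0_def)
lemma adjC[simp]: "T_adj (C i) b \<longleftrightarrow> b = W \<or> (\<exists>j. b = L i j)"
  by (cases b) (auto simp: T_adj_def T_adj0_def)
lemma adjL[simp]: "T_adj (L i j) b \<longleftrightarrow> b = C i"
  by (cases b) (auto simp: T_adj_def T_adj0_def)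

lemma memW[simp]: "W \<in> T_verts g k r x" by (simp add: T_verts_def)
lemma memU[simp]: "U i \<in> T_verts g k r x \<longleftrightarrow> 1 \<le> i \<and> i \<le> k - 1" by (auto simp: T_verts_def)
lemma memC[simp]: "C i \<in> T_verts g k r x \<longleftrightarrow> 1 \<le> i \<and> i \<le> r + 1" by (auto simp: T_verts_def)
lemma memL[simp]: "L i j \<in> T_verts g k r x \<longleftrightarrow>
   (1 \<le> i \<and> i \<le> r \<and> 1 \<le> j \<and> j \<le> g) \<or> (i = r + 1 \<and> 1 \<le> j \<and> j \<le> x)"
  by (auto simp: T_verts_def)

lemma Tv_eq: "T_verts g k r x = {W} \<union> U ` {1..k-1} \<union> C ` {1..r+1}
   \<union> (\<lambda>(i,j). L i j) ` ({1..r}\<times>{1..g}) \<union> L (r+1) ` {1..x}"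
  by (auto simp: T_verts_def)

lemma Tv_finite[simp]: "finite (T_verts g k r x)"
  unfolding Tv_eq by auto

lemma Tv_card:
  assumes "k \<ge> 1"
  shows "card (T_verts g k r x) = (g + 1) * r + x + 1 + k"
proof -
  have i1: "card (U ` {1..k-1}) = k - 1" by (simp add: card_image inj_on_def)
  have i2: "card (C ` {1..r+1}) = r + 1" by (simp add: card_image inj_on_def)
  have i3: "card ((\<lambda>(i,j). L i j) ` ({1..r}\<times>{1..g})) = r * g"
    by (subst card_image) (auto simp: inj_on_def)
  have i4: "card (L (r+1) ` {1..x}) = x" by (simp add: card_image inj_on_def)
  have "card (T_verts g k r x) = 1 + (k - 1) + (r + 1) + r * g + x"
    unfolding Tv_eq
    apply (subst card_Un_disjoint, simp, simp, force)+
    using i1 i2 i3 i4 by simp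
  thus ?thesis using assms by (simp add: algebra_simps)
qed

lemma isolated:
  assumes "a \<in> A" "\<forall>y\<in>A. \<not> E a y"
  shows "comp_in A E a = {a}"
proof -
  { fix b assume "(a,b) \<in> {(x, y). x \<in> A \<and> y \<in> A \<and> E x y}\<^sup>*"
    hence "b = a" by (rule converse_rtranclE) (use assms in auto) }
  thus ?thesis using assms unfolding comp_in_def reach_in_def by auto
qed

fun idx :: "vtx \<Rightarrow> nat" where
  "idx (C i) = i" | "idx (L i j) = i" | "idx _ = 0"

lemma reach_step: "x' \<in> A \<Longrightarrow> y \<in> A \<Longrightarrow> E x' y \<Longrightarrow> reach_in A E x' y"
  unfolding reach_in_def by (rule r_into_rtrancl) auto

lemma reach_trans: "reach_in A E a b \<Longrightarrow> reach_in A E b c \<Longrightarrow> reach_in A E a c"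
  unfolding reach_in_def by (rule rtrancl_trans)

lemma reach_refl: "reach_in A E a a"
  unfolding reach_in_def by simp

theorem lemma5p1:
  fixes g k r x :: nat
  assumes "g \<ge> 1" and "k \<ge> 1" and "r \<ge> 1"
    and "g + 1 \<le> x" and "x \<le> 2 * g"
  shows "card (T_verts g k r x) = (g + 1) * r + x + 1 + k
    \<and> (\<exists>S. is_Rg_cutset g (T_verts g k r x) T_adj S)
    \<and> kappa_g g (T_verts g k r x) T_adj = k"
proof -
  define V where "V = T_verts g k r x"
  define S0 where "S0 = insert W (U ` {1..k-1})"
  have WV: "W \<in> V" unfolding V_def by simp
  have S0V: "S0 \<subseteq> V" unfolding S0_def V_def by auto
  have cS0: "card S0 = k" unfolding S0_def using assms(2)
    by (subst card_insert_disjoint) (auto simp: card_image inj_on_def)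
  have idx_inv: "idx a = idx b" if "(a,b) \<in> {(x', y). x' \<in> V - S0 \<and> y \<in> V - S0 \<and> T_adj x' y}\<^sup>*" for a b
    using that
  proof (induction rule: rtrancl_induct)
    case base then show ?case by simp
  next
    case (step y z)
    have "W \<notin> V - S0" unfolding S0_def by auto
    with step show ?case by (cases y) auto
  qed
  have cut: "is_cutset V T_adj S0"
  proof -
    have "C 1 \<in> V - S0" "C (r+1) \<in> V - S0" unfolding V_def S0_def by auto
    moreover have "\<not> reach_in (V - S0) T_adj (C 1) (C (r + 1))"
      using idx_inv[of "C 1" "C (r+1)"] assms(3) unfolding reach_in_def by auto
    ultimately show ?thesis using S0V unfolding is_cutset_def by blast
  qed
  have comps: "card (comp_in (V - S0) T_adj a) \<ge> g + 1" if a: "a \<in> V - S0" for a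
  proof -
    obtain i where i: "1 \<le> i" "i \<le> r + 1" and ra: "reach_in (V - S0) T_adj a (C i)"
    proof (cases a)
      case W then show ?thesis using a unfolding S0_def by auto
    next
      case (U j) then show ?thesis using a unfolding S0_def V_def by auto
    next
      case (C j) then show ?thesis using a that[of j] reach_refl[of "V - S0" T_adj a] by (auto simp: V_def)
    next
      case (L i j)
      have "C i \<in> V - S0" using a L unfolding V_def S0_def by auto
      then show ?thesis using a L that[of i] reach_step[of a "V - S0" "C i" T_adj]
        by (auto simp: V_def)
    qed
    have sub: "insert (C i) (L i ` {1..g}) \<subseteq> comp_in (V - S0) T_adj a"
    proof
      fix b assume b: "b \<in> insert (C i) (L i ` {1..g})"
      have CiV: "C i \<in> V - S0" using i unfolding V_def S0_def by auto
      show "b \<in> comp_in (V - S0) T_adj a"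
      proof (cases "b = C i")
        case True then show ?thesis using ra CiV by (simp add: comp_in_def)
      next
        case False
        then obtain j where j: "b = L i j" "1 \<le> j" "j \<le> g" using b by auto
        have bV: "b \<in> V - S0" using i j assms(4) unfolding V_def S0_def by auto
        have "reach_in (V - S0) T_adj (C i) b" using CiV bV j by (intro reach_step) auto
        then show ?thesis using ra bV reach_trans by (auto simp: comp_in_def)
      qed
    qed
    have "card (insert (C i) (L i ` {1..g})) = g + 1"
      by (subst card_insert_disjoint) (auto simp: card_image inj_on_def)
    moreover have "finite (comp_in (V - S0) T_adj a)"
      unfolding comp_in_def V_def by auto
    ultimately show ?thesis using card_mono[OF _ sub] by simp
  qed
  have R0: "is_Rg_cutset g V T_adj S0"
    unfolding is_Rg_cutset_def using cut comps by auto
  have lower: "card S \<ge> k" if S: "is_Rg_cutset g V T_adj S" for S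
  proof -
    have SV: "S \<subseteq> V" and cs: "\<exists>a\<in>V - S. \<exists>b\<in>V - S. \<not> reach_in (V - S) T_adj a b"
      and big: "\<forall>a\<in>V - S. card (comp_in (V - S) T_adj a) \<ge> g + 1"
      using S unfolding is_Rg_cutset_def is_cutset_def by auto
    have noiso: "False" if "a \<in> V - S" "\<forall>y\<in>V - S. \<not> T_adj a y" for a
    proof -
      have "comp_in (V - S) T_adj a = {a}" using isolated[of a "V - S" T_adj] that by blast
      moreover have "card (comp_in (V - S) T_adj a) \<ge> g + 1" using big that by blast
      ultimately show False using assms(1) by simp
    qed
    have WS: "W \<in> S"
    proof (rule ccontr)
      assume nW: "W \<notin> S"
      have toW: "reach_in (V - S) T_adj a W \<and> reach_in (V - S) T_adj W a" if a: "a \<in> V - S" for a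
      proof (cases a)
        case W then show ?thesis using reach_refl by simp
      next
        case (U j)
        have "W \<in> V - S" using nW WV by auto
        then show ?thesis using a U reach_step[of a "V - S" W T_adj] reach_step[of W "V - S" a T_adj] by auto
      next
        case (C j)
        have "W \<in> V - S" using nW WV by auto
        then show ?thesis using a C reach_step[of a "V - S" W T_adj] reach_step[of W "V - S" a T_adj] by auto
      next
        case (L i j)
        have CiV: "C i \<in> V"  using a L unfolding V_def by auto
        have "C i \<notin> S"
        proof
          assume "C i \<in> S"
          then have "\<forall>y\<in>V - S. \<not> T_adj a y" using L by auto
          then show False using noiso a by blast
        qed
        then have Ci: "C i \<in> V - S" using CiV by auto
        have 1: "reach_in (V - S) T_adj a (C i)" using a Ci L by (intro reach_step) auto
        have 2: "reach_in (V - S) T_adj (C i) W" using Ci nW WV by (intro reach_step) auto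
        have 3: "reach_in (V - S) T_adj (C i) a" using a Ci L by (intro reach_step) auto
        have 4: "reach_in (V - S) T_adj W (C i)" using Ci nW WV by (intro reach_step) auto
        show ?thesis using reach_trans[OF 1 2] reach_trans[OF 4 3] by simp
      qed
      from cs obtain a b where "a \<in> V - S" "b \<in> V - S" "\<not> reach_in (V - S) T_adj a b" by auto
      then have "reach_in (V - S) T_adj a W" "reach_in (V - S) T_adj W b" using toW by auto
      then have "reach_in (V - S) T_adj a b" by (rule reach_trans)
      with \<open>\<not> reach_in (V - S) T_adj a b\<close> show False by simp
    qed
    have US: "U ` {1..k-1} \<subseteq> S"
    proof
      fix u assume "u \<in> U ` {1..k-1}"
      then obtain j where j: "u = U j" "1 \<le> j" "j \<le> k - 1" by auto
      show "u \<in> S"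
      proof (rule ccontr)
        assume "u \<notin> S"
        then have "u \<in> V - S" using j unfolding V_def by auto
        moreover have "\<forall>y\<in>V - S. \<not> T_adj u y" using j WS by auto
        ultimately show False using noiso by blast
      qed
    qed
    have "S0 \<subseteq> S" using WS US unfolding S0_def by auto
    moreover have "finite S" using SV Tv_finite[of g k r x] finite_subset unfolding V_def by blast
    ultimately show ?thesis using card_mono cS0 by fastforce
  qed
  have "kappa_g g V T_adj = k"
    unfolding kappa_g_def
  proof (rule Least_equality)
    show "\<exists>S. is_Rg_cutset g V T_adj S \<and> card S = k" using R0 cS0 by blast
  next
    fix m assume "\<exists>S. is_Rg_cutset g V T_adj S \<and> card S = m"
    then show "k \<le> m" using lower by blast
  qed
  then show ?thesis using Tv_card[OF assms(2)] R0 unfolding V_def by blast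
qed

end
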